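(* Let $1\le q\le k$, $n\ge 2$, $f\in P_1^{k,q}$, and for $i=1,\dots,n$ let $a_i,b_i\in E_k$ with $\gcd(a_i,k)=1$ and $g_i(x_i)=[a_if(x_i)+b_i]\bmod k$. Let $h(x_1,\dots,x_n)=[g_1(x_1)+\dots+g_n(x_n)]\bmod k$. Let $1<t\le n$ and distinct indices $j_1,\dots,j_t\in\{1,\dots,n\}$ satisfy $\gcd(a_{j_1}+a_{j_2}+\dots+a_{j_t},k)=1$. Then the function obtained from $h$ by identifying the variables $x_{j_1},\dots,x_{j_t}$ (i.e. substituting one common variable $z$ — either a new variable or one of $x_{j_1},\dots,x_{j_t}$ — for all of them), regarded as a function of $z$ and the remaining $n-t$ variables, belongs to $P_{n-t+1}^k$ and is an $H(q)$-function.
   Context: $E_k=\{0,1,\dots,k-1\}$, $k\ge 2$, with arithmetic modulo $k$. $P_m^k$ is the set of all functions $E_k^m\to E_k$; $P_1^{k,q}$ is the set of functions $E_k\to E_k$ taking exactly $q$ distinct values. For a variable $x$ of a function $g$, $\mathrm{Spr}(x,g)$ is the set of numbers of distinct values of all one-variable functions obtained from $g$ by fixing all variables other than $x$ to constants (for a function of the single variable $x$, this is $\{$number of its distinct values$\}$). A function $g$ is an $H(q)$-function if $\mathrm{Spr}(x,g)=\{q\}$ for every variable $x$ of $g$. *)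

theory Defs
  imports Main
begin

text \<open>Functions of k-valued logic over a finite set V of variable indices:
  a function is g :: (nat \<Rightarrow> nat) \<Rightarrow> nat, applied to assignments
  x with x i \<in> E_k = {..<k} for i \<in> V.\<close>

definition in_Pk :: "nat \<Rightarrow> nat set \<Rightarrow> ((nat \<Rightarrow> nat) \<Rightarrow> nat) \<Rightarrow> bool" where
  "in_Pk k V g \<longleftrightarrow> finite V \<and>
     (\<forall>x. (\<forall>i\<in>V. x i < k) \<longrightarrow> g x < k) \<and>
     (\<forall>x y. (\<forall>i\<in>V. x i = y i) \<longrightarrow> g x = g y)"

definition Spr :: "nat \<Rightarrow> nat set \<Rightarrow> ((nat \<Rightarrow> nat) \<Rightarrow> nat) \<Rightarrow> nat \<Rightarrow> nat set" where
  "Spr k V g v = {card ((\<lambda>c. g (x(v := c))) ` {..<k}) | x. \<forall>i\<in>V. x i < k}"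

definition H_function :: "nat \<Rightarrow> nat \<Rightarrow> nat set \<Rightarrow> ((nat \<Rightarrow> nat) \<Rightarrow> nat) \<Rightarrow> bool" where
  "H_function k q V g \<longleftrightarrow> (\<forall>v\<in>V. Spr k V g v = {q})"

end

theory Submission
  imports Defs "HOL-Number_Theory.Cong"
begin

lemma inj_aff:
  fixes A C k :: nat
  assumes "coprime A k"
  shows "inj_on (\<lambda>u. (A * u + C) mod k) {..<k}"
proof (rule inj_onI)
  fix u u' assume u: "u \<in> {..<k}" and u': "u' \<in> {..<k}"
    and e: "(A * u + C) mod k = (A * u' + C) mod k"
  have "[A * u + C = A * u' + C] (mod k)" using e by (simp add: cong_def)
  then have "[A * u = A * u'] (mod k)" by (simp add: cong_add_rcancel_nat)
  then have "[u = u'] (mod k)" using cong_mult_lcancel_nat[OF assms] by blast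
  then show "u = u'" using u u' cong_less_modulus_unique_nat by auto
qed

lemma card_aff:
  fixes A C k :: nat and f :: "nat \<Rightarrow> nat"
  assumes "coprime A k" "f ` {..<k} \<subseteq> {..<k}"
  shows "card ((\<lambda>c. (A * f c + C) mod k) ` {..<k}) = card (f ` {..<k})"
proof -
  have "(\<lambda>c. (A * f c + C) mod k) ` {..<k} = (\<lambda>u. (A * u + C) mod k) ` (f ` {..<k})"
    by (simp add: image_image)
  also have "card \<dots> = card (f ` {..<k})"
    by (rule card_image, rule inj_on_subset[OF inj_aff[OF assms(1)] assms(2)])
  finally show ?thesis .
qed

lemma key:
  fixes a b f x :: "nat \<Rightarrow> nat" and k c :: nat
  assumes "finite N" "I \<subseteq> N" "\<forall>i\<in>I. x i = c"
  shows "(\<Sum>i\<in>N. (a i * f (x i) + b i) mod k) mod k =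
     ((\<Sum>i\<in>I. a i) * f c + ((\<Sum>i\<in>I. b i) + (\<Sum>i\<in>N-I. (a i * f (x i) + b i) mod k))) mod k"
proof -
  let ?R = "\<Sum>i\<in>N-I. (a i * f (x i) + b i) mod k"
  have fI: "finite I" using assms finite_subset by blast
  have "(\<Sum>i\<in>N. (a i * f (x i) + b i) mod k) = (\<Sum>i\<in>I. (a i * f (x i) + b i) mod k) + ?R"
    using sum.subset_diff[OF assms(2) assms(1)] by (simp add: add.commute)
  also have "(\<Sum>i\<in>I. (a i * f (x i) + b i) mod k) = (\<Sum>i\<in>I. (a i * f c + b i) mod k)"
    using assms(3) by simp
  finally have s: "(\<Sum>i\<in>N. (a i * f (x i) + b i) mod k) = (\<Sum>i\<in>I. (a i * f c + b i) mod k) + ?R" .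
  have "((\<Sum>i\<in>I. (a i * f c + b i) mod k) + ?R) mod k
      = ((\<Sum>i\<in>I. (a i * f c + b i) mod k) mod k + ?R) mod k" by (simp add: mod_add_left_eq)
  also have "(\<Sum>i\<in>I. (a i * f c + b i) mod k) mod k = (\<Sum>i\<in>I. (a i * f c + b i)) mod k"
    by (simp add: mod_sum_eq)
  also have "((\<Sum>i\<in>I. (a i * f c + b i)) mod k + ?R) mod k = ((\<Sum>i\<in>I. (a i * f c + b i)) + ?R) mod k"
    by (simp add: mod_add_left_eq)
  also have "(\<Sum>i\<in>I. (a i * f c + b i)) = (\<Sum>i\<in>I. a i) * f c + (\<Sum>i\<in>I. b i)"
    by (simp add: sum.distrib sum_distrib_right)
  finally show ?thesis using s by (simp add: add.assoc)
qed

theorem theorem2p3: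
  fixes k q n t z :: nat and f a b :: "nat \<Rightarrow> nat" and J :: "nat set"
  assumes "k \<ge> 2" and "1 \<le> q" and "q \<le> k" and "n \<ge> 2"
    and "f ` {..<k} \<subseteq> {..<k}" and "card (f ` {..<k}) = q"
    and "\<forall>i\<in>{1..n}. a i < k \<and> b i < k \<and> coprime (a i) k"
    and "J \<subseteq> {1..n}" and "card J = t" and "1 < t"
    and "coprime (\<Sum>i\<in>J. a i) k"
    and "z \<notin> {1..n} - J"
  shows "let h = (\<lambda>x. (\<Sum>i=1..n. (a i * f (x i) + b i) mod k) mod k);
             V = insert z ({1..n} - J);
             h' = (\<lambda>y. h (\<lambda>i. if i \<in> J then y z else y i))
         in card V = n - t + 1 \<and> in_Pk k V h' \<and> H_function k q V h'"
proof -
  define h where "h = (\<lambda>x. (\<Sum>i=1..n. (a i * f (x i) + b i) mod k) mod k)"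
  define V where "V = insert z ({1..n} - J)"
  define h' where "h' = (\<lambda>y. h (\<lambda>i. if i \<in> J then y z else y i))"
  have fJ: "finite J" using assms(8) finite_subset by blast
  have c1: "card V = n - t + 1"
    unfolding V_def using assms(8,9,12) fJ by (simp add: card_Diff_subset)
  have c2: "in_Pk k V h'"
    unfolding in_Pk_def
  proof (intro conjI allI impI)
    show "finite V" unfolding V_def by simp
    fix x show "h' x < k" unfolding h'_def h_def using assms(1) by simp
  next
    fix x y :: "nat \<Rightarrow> nat" assume e: "\<forall>i\<in>V. x i = y i"
    have "\<And>i. i \<in> {1..n} \<Longrightarrow> (if i \<in> J then x z else x i) = (if i \<in> J then y z else y i)"
      using e unfolding V_def by auto
    then show "h' x = h' y" unfolding h'_def h_def by (intro arg_cong[where f="\<lambda>s. s mod k"] sum.cong) auto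
  qed
  have c3: "H_function k q V h'"
    unfolding H_function_def
  proof
    fix v assume vV: "v \<in> V"
    have one: "card ((\<lambda>c. h' (x(v := c))) ` {..<k}) = q" for x
    proof -
      define I where "I = (if v = z then J else {v})"
      define A where "A = (\<Sum>i\<in>I. a i)"
      have IN: "I \<subseteq> {1..n}" unfolding I_def using vV assms(8) V_def by auto
      have cA: "coprime A k" unfolding A_def I_def using assms(7,11) vV V_def by auto
      have xi: "\<And>c i. i \<in> {1..n} - I \<Longrightarrow> (if i \<in> J then (x(v:=c)) z else (x(v:=c)) i)
                   = (if i \<in> J then x z else x i)"
        unfolding I_def using vV assms(12) V_def by (auto split: if_splits)
      have xc: "\<And>c. \<forall>i\<in>I. (if i \<in> J then (x(v:=c)) z else (x(v:=c)) i) = c"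
        unfolding I_def using vV V_def by auto
      define C where "C = (\<Sum>i\<in>I. b i) + (\<Sum>i\<in>{1..n}-I. (a i * f (if i \<in> J then x z else x i) + b i) mod k)"
      have "\<And>c. h' (x(v := c)) = (A * f c + C) mod k"
      proof -
        fix c
        have "h' (x(v := c)) = (A * f c + ((\<Sum>i\<in>I. b i) + (\<Sum>i\<in>{1..n}-I. (a i * f (if i \<in> J then (x(v:=c)) z else (x(v:=c)) i) + b i) mod k))) mod k"
          unfolding h'_def h_def A_def by (rule key[OF _ IN xc]) simp
        also have "(\<Sum>i\<in>{1..n}-I. (a i * f (if i \<in> J then (x(v:=c)) z else (x(v:=c)) i) + b i) mod k)
           = (\<Sum>i\<in>{1..n}-I. (a i * f (if i \<in> J then x z else x i) + b i) mod k)"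
          by (rule sum.cong[OF refl]) (simp only: xi)
        finally show "h' (x(v := c)) = (A * f c + C) mod k" unfolding C_def .
      qed
      then have "(\<lambda>c. h' (x(v := c))) ` {..<k} = (\<lambda>c. (A * f c + C) mod k) ` {..<k}" by simp
      then show ?thesis using card_aff[OF cA assms(5)] assms(6) by simp
    qed
    show "Spr k V h' v = {q}"
    proof
      show "Spr k V h' v \<subseteq> {q}" unfolding Spr_def using one by auto
      show "{q} \<subseteq> Spr k V h' v" unfolding Spr_def using one[of "\<lambda>_. 0"] assms(1)
        by (auto intro!: exI[of _ "\<lambda>_. 0"])
    qed
  qed
  show ?thesis unfolding Let_def using c1 c2 c3 unfolding h'_def h_def V_def by simp
qed

end
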